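(* Let $\beta_1 = 0$ and let $\beta_2 \in [0,1)$. There exist a one-dimensional online convex optimization problem (a compact convex feasible set $\mathcal{F} \subset \mathbb{R}$ and a sequence of convex loss functions $f_t : \mathcal{F} \to \mathbb{R}$ with uniformly bounded gradients) and an initial point $x_1 \in \mathcal{F}$ such that, for every initial step size $\alpha > 0$, the iterates $\{x_t\}$ of \textsc{Adam} with parameters $\alpha, \beta_1, \beta_2$ satisfy $R_T/T \not\to 0$ as $T \to \infty$.
   Context: \textsc{Adam} (without debiasing) on a closed convex set $\mathcal{F} \subset \mathbb{R}^d$ with loss functions $f_1, f_2, \dots$, initial point $x_1 \in \mathcal{F}$, initial step size $\alpha > 0$ and constants $\beta_1, \beta_2 \in [0,1)$ is defined as follows. Set $m_0 = v_0 = 0 \in \mathbb{R}^d$. For $t = 1, 2, \dots$: $g_t = \nabla f_t(x_t)$; $m_t = \beta_1 m_{t-1} + (1-\beta_1) g_t$; $v_t = \beta_2 v_{t-1} + (1-\beta_2) g_t^2$ (square taken coordinatewise); $V_t = \mathrm{diag}(v_t)$; $\alpha_t = \alpha/\sqrt{t}$; $\hat{x}_{t+1} = x_t - \alpha_t V_t^{-1/2} m_t$; $x_{t+1} = \Pi_{\mathcal{F}, \sqrt{V_t}}(\hat{x}_{t+1})$, where for a positive definite matrix $M$, $\Pi_{\mathcal{F}, M}(y) = \arg\min_{x \in \mathcal{F}} \|M^{1/2}(x-y)\|$. The regret after $T$ steps is $R_T = \sum_{t=1}^T f_t(x_t) - \min_{x \in \mathcal{F}} \sum_{t=1}^T f_t(x)$.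 *)

theory Defs
  imports "HOL-Analysis.Analysis"
begin

definition wproj :: "real set \<Rightarrow> real \<Rightarrow> real \<Rightarrow> real" where
  "wproj F M y = (SOME x. x \<in> F \<and> (\<forall>z\<in>F. \<bar>sqrt M * (x - y)\<bar> \<le> \<bar>sqrt M * (z - y)\<bar>))"

text \<open>One-dimensional Adam without debiasing. The state after n steps is
  (x_{n+1}, m_n, v_n); losses are indexed from 1, gradient g_t = f_t'(x_t).\<close>
fun adam_state :: "real set \<Rightarrow> (nat \<Rightarrow> real \<Rightarrow> real) \<Rightarrow> real \<Rightarrow> real \<Rightarrow> real \<Rightarrow> real
     \<Rightarrow> nat \<Rightarrow> real \<times> real \<times> real" where
  "adam_state F f x1 \<alpha> \<beta>1 \<beta>2 0 = (x1, 0, 0)"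
| "adam_state F f x1 \<alpha> \<beta>1 \<beta>2 (Suc n) =
     (let (x, m, v) = adam_state F f x1 \<alpha> \<beta>1 \<beta>2 n;
          t = Suc n;
          g = deriv (f t) x;
          m' = \<beta>1 * m + (1 - \<beta>1) * g;
          v' = \<beta>2 * v + (1 - \<beta>2) * g\<^sup>2;
          \<alpha>t = \<alpha> / sqrt (real t);
          xhat = x - \<alpha>t * m' / sqrt v'
      in (wproj F (sqrt v') xhat, m', v'))"

definition adam_x :: "real set \<Rightarrow> (nat \<Rightarrow> real \<Rightarrow> real) \<Rightarrow> real \<Rightarrow> real \<Rightarrow> real \<Rightarrow> real
     \<Rightarrow> nat \<Rightarrow> real" where
  "adam_x F f x1 \<alpha> \<beta>1 \<beta>2 t = fst (adam_state F f x1 \<alpha> \<beta>1 \<beta>2 (t - 1))"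

definition regret :: "real set \<Rightarrow> (nat \<Rightarrow> real \<Rightarrow> real) \<Rightarrow> (nat \<Rightarrow> real) \<Rightarrow> nat \<Rightarrow> real" where
  "regret F f x T = (\<Sum>t=1..T. f t (x t)) - (INF y\<in>F. \<Sum>t=1..T. f t y)"

end

theory Submission imports Defs begin

definition cc :: "nat \<Rightarrow> nat \<Rightarrow> real" where
  "cc k t = (if k dvd t then real k else -1)"

definition clamp :: "real \<Rightarrow> real" where
  "clamp y = max 0 (min 1 y)"

fun VV :: "real \<Rightarrow> nat \<Rightarrow> nat \<Rightarrow> real" where
  "VV b k 0 = 0"
| "VV b k (Suc n) = b * VV b k n + (1 - b) * (cc k (Suc n))\<^sup>2"

fun XX :: "real \<Rightarrow> real \<Rightarrow> nat \<Rightarrow> nat \<Rightarrow> real" where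
  "XX a b k 0 = 1"
| "XX a b k (Suc n) = clamp (XX a b k n - a / sqrt (real (Suc n)) * cc k (Suc n) / sqrt (VV b k (Suc n)))"

lemma wproj_clamp:
  assumes "M > 0"
  shows "wproj {0..1} M y = clamp y"
proof -
  let ?P = "\<lambda>x. x \<in> {0..1::real} \<and> (\<forall>z\<in>{0..1}. \<bar>sqrt M * (x - y)\<bar> \<le> \<bar>sqrt M * (z - y)\<bar>)"
  have sM: "sqrt M > 0" using assms by simp
  have P: "?P (clamp y)"
    using sM by (auto simp: clamp_def abs_mult)
  have U: "x = clamp y" if "?P x" for x
  proof -
    have "\<bar>x - y\<bar> \<le> \<bar>clamp y - y\<bar>" using that sM
      by (auto simp: abs_mult clamp_def intro: ccontr dest!: bspec[where x="clamp y"])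
    then show ?thesis using that by (auto simp: clamp_def split: if_splits)
  qed
  show ?thesis unfolding wproj_def using someI[of ?P, OF P] U by blast
qed

lemma cc_sq_pos: "k \<ge> 1 \<Longrightarrow> (cc k t)\<^sup>2 \<ge> 1"
  by (auto simp: cc_def)

lemma VV_nonneg: "0 \<le> b \<Longrightarrow> b < 1 \<Longrightarrow> VV b k n \<ge> 0"
  by (induction n) auto

lemma VV_lower: "0 \<le> b \<Longrightarrow> b < 1 \<Longrightarrow> n \<ge> 1 \<Longrightarrow> VV b k n \<ge> (1 - b) * (cc k n)\<^sup>2"
proof (cases n)
  case (Suc m)
  assume a: "0 \<le> b" "b < 1"
  have "b * VV b k m \<ge> 0" using VV_nonneg[OF a] a by simp
  then show ?thesis using Suc by simp
qed simp

lemma VV_pos: "0 \<le> b \<Longrightarrow> b < 1 \<Longrightarrow> k \<ge> 1 \<Longrightarrow> n \<ge> 1 \<Longrightarrow> VV b k n > 0"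
proof -
  assume a: "0 \<le> b" "b < 1" "k \<ge> 1" "n \<ge> 1"
  have "(1 - b) * (cc k n)\<^sup>2 > 0" using a cc_sq_pos[of k n] by (intro mult_pos_pos) auto
  then show ?thesis using VV_lower[OF a(1,2,4), of k] by linarith
qed

lemma VV_upper: "0 \<le> b \<Longrightarrow> b < 1 \<Longrightarrow> k \<ge> 1 \<Longrightarrow> VV b k n \<le> (real k)\<^sup>2"
proof (induction n)
  case 0 then show ?case by simp
next
  case (Suc n)
  have "(cc k (Suc n))\<^sup>2 \<le> (real k)\<^sup>2" using Suc.prems by (auto simp: cc_def)
  then have "b * VV b k n + (1 - b) * (cc k (Suc n))\<^sup>2 \<le> b * (real k)\<^sup>2 + (1 - b) * (real k)\<^sup>2"
    using Suc by (intro add_mono mult_left_mono) auto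
  then show ?case by (simp add: algebra_simps)
qed

lemma adam_state_eq:
  assumes "0 \<le> b" "b < 1" "k \<ge> 1"
  shows "\<exists>m. adam_state {0..1} (\<lambda>t x. cc k t * x) 1 a 0 b n = (XX a b k n, m, VV b k n)"
proof (induction n)
  case 0 then show ?case by simp
next
  case (Suc n)
  then obtain m where m: "adam_state {0..1} (\<lambda>t x. cc k t * x) 1 a 0 b n = (XX a b k n, m, VV b k n)" by blast
  have d: "deriv (\<lambda>x. cc k (Suc n) * x) y = cc k (Suc n)" for y
    by (rule DERIV_imp_deriv) (auto intro!: derivative_eq_intros)
  have pos: "VV b k (Suc n) > 0" using VV_pos[OF assms, of "Suc n"] by simp
  have w: "wproj {0..1} (sqrt (VV b k (Suc n))) y = clamp y" for y
    by (rule wproj_clamp) (use pos in simp)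
  show ?case using w by (simp add: m d Let_def)
qed

lemma adam_x_eq:
  assumes "0 \<le> b" "b < 1" "k \<ge> 1"
  shows "adam_x {0..1} (\<lambda>t x. cc k t * x) 1 a 0 b t = XX a b k (t - 1)"
  using adam_state_eq[OF assms, of a "t - 1"] unfolding adam_x_def by auto

lemma clamp_range: "0 \<le> clamp y" "clamp y \<le> 1"
  by (auto simp: clamp_def)

lemma XX_range: "0 \<le> XX a b k n" "XX a b k n \<le> 1"
  by (cases n; simp add: clamp_range)+

lemma cc_nd: "\<not> k dvd n \<Longrightarrow> cc k n = -1"
  by (simp add: cc_def)

lemma XX_up: "\<not> k dvd Suc p \<Longrightarrow>
   XX a b k (Suc p) = clamp (XX a b k p + a / sqrt (real (Suc p)) / sqrt (VV b k (Suc p)))"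
  by (simp add: cc_nd)

lemma XX_down: "k dvd Suc p \<Longrightarrow>
   XX a b k (Suc p) = clamp (XX a b k p - a / sqrt (real (Suc p)) * real k / sqrt (VV b k (Suc p)))"
  by (simp add: cc_def)

lemma clamp_ge: "clamp y \<ge> min 1 y"
  by (auto simp: clamp_def)

lemma XX_init:
  assumes "a > 0" "0 \<le> b" "b < 1" "k \<ge> 1" "j < k"
  shows "XX a b k j = 1"
  using assms(5)
proof (induction j)
  case 0 then show ?case by simp
next
  case (Suc j)
  have nd: "\<not> k dvd Suc j" using Suc.prems by (auto dest: dvd_imp_le)
  have "VV b k (Suc j) \<ge> 0" using VV_nonneg assms by blast
  then have "a / sqrt (real (Suc j)) / sqrt (VV b k (Suc j)) \<ge> 0" using assms by (simp del: VV.simps)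
  then show ?case using Suc XX_up[OF nd, of a b] by (simp add: clamp_def)
qed

lemma XX_period:
  assumes "a > 0" "0 \<le> b" "b < 1" "k \<ge> 1" "q \<ge> 1"
    and one: "XX a b k (q * k - 1) = 1" and "j \<le> k - 1"
  shows "XX a b k (q * k + j) \<ge> min 1 (1 - a / sqrt (real (q*k)) * real k / sqrt (VV b k (q*k))
           + (\<Sum>i=1..j. a / sqrt (real (q*k+i)) / sqrt (VV b k (q*k+i))))"
  using assms(7)
proof (induction j)
  case 0
  have qk: "q * k = Suc (q * k - 1)" using assms by (simp add: Suc_le_eq)
  have dv: "k dvd Suc (q*k-1)" unfolding qk[symmetric] by simp
  have "XX a b k (Suc (q*k-1)) = clamp (1 - a / sqrt (real (Suc (q*k-1))) * real k / sqrt (VV b k (Suc (q*k-1))))"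
    using XX_down[OF dv, of a b] by (simp only: one)
  then have "XX a b k (q*k) = clamp (1 - a / sqrt (real (q*k)) * real k / sqrt (VV b k (q*k)))"
    by (simp only: qk[symmetric])
  then show ?case using clamp_ge by simp
next
  case (Suc j)
  let ?u = "a / sqrt (real (q*k+Suc j)) / sqrt (VV b k (q*k+Suc j))"
  let ?L = "1 - a / sqrt (real (q*k)) * real k / sqrt (VV b k (q*k)) + (\<Sum>i=1..j. a / sqrt (real (q*k+i)) / sqrt (VV b k (q*k+i)))"
  have nd: "\<not> k dvd Suc (q*k+j)"
  proof
    assume "k dvd Suc (q*k+j)"
    then have "k dvd Suc j" using dvd_add_right_iff[of k "q*k" "Suc j"] by simp
    then show False using Suc.prems by (auto dest: dvd_imp_le)
  qed
  have IH: "XX a b k (q*k+j) \<ge> min 1 ?L" using Suc by simp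
  have up: "XX a b k (q*k + Suc j) = clamp (XX a b k (q*k+j) + ?u)"
    using XX_up[OF nd, of a b] by simp
  have "VV b k (q*k+Suc j) \<ge> 0" using VV_nonneg assms by blast
  then have u0: "?u \<ge> 0" using assms by (simp del: VV.simps)
  have "min 1 (?L + ?u) \<le> min 1 (XX a b k (q*k+j) + ?u)" using IH u0 by linarith
  also have "\<dots> \<le> XX a b k (q*k + Suc j)" using up clamp_ge by simp
  finally have fin: "min 1 (?L + ?u) \<le> XX a b k (q*k + Suc j)" .
  have sm: "(\<Sum>i=1..Suc j. a / sqrt (real (q*k+i)) / sqrt (VV b k (q*k+i))) = (\<Sum>i=1..j. a / sqrt (real (q*k+i)) / sqrt (VV b k (q*k+i))) + ?u"
    by simp
  show ?case using fin unfolding sm by (simp only: add.assoc)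
qed

lemma VV_decay:
  assumes "0 \<le> b" "b < 1" "k \<ge> 1" "i \<le> k - 1"
  shows "VV b k (q*k+i) \<le> b^i * (real k)\<^sup>2 + 1"
  using assms(4)
proof (induction i)
  case 0 then show ?case using VV_upper[OF assms(1-3), of "q*k"] by simp
next
  case (Suc i)
  have nd: "\<not> k dvd Suc (q*k+i)"
  proof
    assume "k dvd Suc (q*k+i)"
    then have "k dvd Suc i" using dvd_add_right_iff[of k "q*k" "Suc i"] by simp
    then show False using Suc.prems by (auto dest: dvd_imp_le)
  qed
  have e: "VV b k (q*k + Suc i) = b * VV b k (q*k+i) + (1 - b)"
    using nd by (simp add: cc_def)
  have "b * VV b k (q*k+i) \<le> b * (b^i * (real k)\<^sup>2 + 1)"
    using Suc assms by (intro mult_left_mono) auto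
  then show ?case unfolding e by (simp add: algebra_simps)
qed

lemma key_ineq:
  assumes a: "a > 0" and b: "0 \<le> b" "b < 1" and m: "m \<ge> 1" and k: "k = m + N + 1"
    and bm: "b^m * (real k)\<^sup>2 \<le> 1" and N: "real N \<ge> 2 / sqrt (1 - b)" and q: "q \<ge> 1"
  shows "a / sqrt (real (q*k)) * real k / sqrt (VV b k (q*k))
         \<le> (\<Sum>i=1..k-1. a / sqrt (real (q*k+i)) / sqrt (VV b k (q*k+i)))"
proof -
  have k1: "k \<ge> 1" using k by simp
  define s where "s = sqrt (real (q*k))"
  have s0: "s > 0" using q k1 unfolding s_def by simp
  have sb: "sqrt (1 - b) > 0" using b by simp
  have cq: "cc k (q*k) = real k" by (simp add: cc_def)
  have V0: "VV b k (q*k) \<ge> (1 - b) * (real k)\<^sup>2"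
    using VV_lower[OF b, of "q*k" k] q k1 cq by simp
  have "sqrt ((1 - b) * (real k)\<^sup>2) \<le> sqrt (VV b k (q*k))"
    using V0 by (rule real_sqrt_le_mono)
  then have sV: "sqrt (1 - b) * real k \<le> sqrt (VV b k (q*k))"
    using b by (simp add: real_sqrt_mult)
  have kpos: "real k > 0" using k1 by simp
  have d: "a / sqrt (real (q*k)) * real k / sqrt (VV b k (q*k)) \<le> a / (s * sqrt (1 - b))"
  proof -
    have "a / sqrt (real (q*k)) * real k / sqrt (VV b k (q*k)) = (a / s * real k) / sqrt (VV b k (q*k))"
      by (simp add: s_def)
    also have "\<dots> \<le> (a / s * real k) / (sqrt (1 - b) * real k)"
    proof (rule divide_left_mono)
      have p1: "sqrt (1 - b) * real k > 0" using sb kpos by simp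
      show "sqrt (1 - b) * real k \<le> sqrt (VV b k (q*k))" by (rule sV)
      show "0 \<le> a / s * real k" using a s0 kpos by simp
      show "0 < sqrt (VV b k (q*k)) * (sqrt (1 - b) * real k)"
      proof (rule mult_pos_pos)
        show "0 < sqrt (VV b k (q*k))" using p1 sV by linarith
      qed (rule p1)
    qed
    also have "\<dots> = a / (s * sqrt (1 - b))" using kpos by simp
    finally show ?thesis .
  qed
  have ub: "a / (2 * s) \<le> a / sqrt (real (q*k+i)) / sqrt (VV b k (q*k+i))"
    if i: "i \<in> {m..k-1}" for i
  proof -
    have ik: "i \<le> k - 1" "m \<le> i" using i by auto
    have "VV b k (q*k+i) \<le> b^i * (real k)\<^sup>2 + 1" by (rule VV_decay[OF b k1 ik(1)])
    also have "b^i * (real k)\<^sup>2 \<le> b^m * (real k)\<^sup>2"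
      using b ik by (intro mult_right_mono power_decreasing) auto
    finally have V2: "VV b k (q*k+i) \<le> 2" using bm by simp
    have "1 \<le> q*k+i" using q k1 by (simp add: Suc_le_eq)
    then have Vp: "VV b k (q*k+i) > 0" using VV_pos[OF b k1, of "q*k+i"] by simp
    have qki: "real (q*k+i) \<le> 2 * real (q*k)"
    proof -
      have "i \<le> k" using ik by simp
      also have "k \<le> q * k" using q by simp
      finally have "q*k+i \<le> 2*(q*k)" by linarith
      then have "real (q*k+i) \<le> real (2*(q*k))" by (simp only: of_nat_le_iff)
      then show ?thesis by simp
    qed
    have "sqrt (real (q*k+i)) * sqrt (VV b k (q*k+i)) \<le> sqrt (2 * real (q*k)) * sqrt 2"
      using qki V2 Vp by (intro mult_mono) auto
    also have "\<dots> = 2 * s" unfolding s_def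
      by (simp add: real_sqrt_mult)
    finally have le: "sqrt (real (q*k+i)) * sqrt (VV b k (q*k+i)) \<le> 2 * s" .
    have "q*k+i > 0" using q k1 by (simp add: Suc_le_eq)
    then have "real (q*k+i) > 0" by (simp only: of_nat_0_less_iff)
    then have pp: "sqrt (real (q*k+i)) * sqrt (VV b k (q*k+i)) > 0" using Vp by (intro mult_pos_pos) auto
    have "a / (2 * s) \<le> a / (sqrt (real (q*k+i)) * sqrt (VV b k (q*k+i)))"
      using le pp a by (intro divide_left_mono) auto
    then show ?thesis by simp
  qed
  have nn: "0 \<le> a / sqrt (real (q*k+i)) / sqrt (VV b k (q*k+i))" for i
    using VV_nonneg[OF b, of k "q*k+i"] a by simp
  have "real (N+1) * (a / (2 * s)) = real (card {m..k-1}) * (a / (2 * s))" using k by simp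
  also have "\<dots> \<le> (\<Sum>i=m..k-1. a / sqrt (real (q*k+i)) / sqrt (VV b k (q*k+i)))"
    using ub by (intro sum_bounded_below) auto
  also have "\<dots> \<le> (\<Sum>i=1..k-1. a / sqrt (real (q*k+i)) / sqrt (VV b k (q*k+i)))"
    using m nn by (intro sum_mono2) auto
  finally have S: "real (N+1) * (a / (2 * s)) \<le> (\<Sum>i=1..k-1. a / sqrt (real (q*k+i)) / sqrt (VV b k (q*k+i)))" .
  have "1 / sqrt (1 - b) \<le> real (N+1) / 2" using N by (simp add: field_simps)
  then have "(a / s) * (1 / sqrt (1 - b)) \<le> (a / s) * (real (N+1) / 2)"
    using a s0 by (intro mult_left_mono) auto
  then have "a / (s * sqrt (1 - b)) \<le> real (N+1) * (a / (2 * s))" by (simp add: field_simps)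
  then show ?thesis using d S by linarith
qed

lemma XX_periodic:
  assumes a: "a > 0" and b: "0 \<le> b" "b < 1" and m: "m \<ge> 1" and k: "k = m + N + 1"
    and bm: "b^m * (real k)\<^sup>2 \<le> 1" and N: "real N \<ge> 2 / sqrt (1 - b)" and q: "q \<ge> 1"
  shows "XX a b k (q * k - 1) = 1"
  using q
proof (induction q rule: dec_induct)
  case base
  show ?case using XX_init[OF a b, of k "k - 1"] k by simp
next
  case (step q)
  have k1: "k \<ge> 1" using k by simp
  have "XX a b k (q * k + (k - 1)) \<ge> min 1 (1 - a / sqrt (real (q*k)) * real k / sqrt (VV b k (q*k))
           + (\<Sum>i=1..k-1. a / sqrt (real (q*k+i)) / sqrt (VV b k (q*k+i))))"
    using XX_period[OF a b k1 step(1) step(3)] by simp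
  moreover have "a / sqrt (real (q*k)) * real k / sqrt (VV b k (q*k))
         \<le> (\<Sum>i=1..k-1. a / sqrt (real (q*k+i)) / sqrt (VV b k (q*k+i)))"
    by (rule key_ineq[OF a b m k bm N step(1)])
  ultimately have "XX a b k (q * k + (k - 1)) \<ge> 1" by linarith
  moreover have "Suc q * k - 1 = q * k + (k - 1)" using k1 by simp
  ultimately show ?case using XX_range(2)[of a b k "Suc q * k - 1"] by simp
qed

lemma params_exist:
  assumes b: "0 \<le> b" "b < 1"
  shows "\<exists>m N. m \<ge> 1 \<and> real N \<ge> 2 / sqrt (1 - b) \<and> b^m * (real (m + N + 1))\<^sup>2 \<le> 1"
proof -
  define N where "N = nat \<lceil>2 / sqrt (1 - b)\<rceil>"
  have N: "real N \<ge> 2 / sqrt (1 - b)" unfolding N_def by linarith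
  have "norm (sqrt b) < 1" using b by simp
  from powser_times_n_limit_0[OF this]
  have "(\<lambda>n. real n * sqrt b ^ n) \<longlonglongrightarrow> 0" by simp
  then have ev1: "eventually (\<lambda>n. real n * sqrt b ^ n < 1/2) sequentially"
    by (rule order_tendstoD) simp
  have ev2: "eventually (\<lambda>n. n \<ge> N + 1) sequentially" by (rule eventually_ge_at_top)
  obtain m where m1: "real m * sqrt b ^ m < 1/2" and m2: "m \<ge> N + 1"
    using eventually_happens'[OF _ eventually_conj[OF ev1 ev2]] by auto
  have mm: "real (m + N + 1) \<le> 2 * real m" using m2 by simp
  have p: "0 \<le> real m * sqrt b ^ m" using b by simp
  have "b^m * (real (m + N + 1))\<^sup>2 \<le> b^m * (2 * real m)\<^sup>2"
    using mm b by (intro mult_left_mono power_mono) auto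
  also have "\<dots> = 4 * (real m * sqrt b ^ m)\<^sup>2"
  proof -
    have "(sqrt b ^ m)\<^sup>2 = (sqrt b ^ 2) ^ m" by (simp only: power_mult[symmetric] mult.commute)
    also have "\<dots> = b ^ m" using b by simp
    finally have sq: "(sqrt b ^ m)\<^sup>2 = b ^ m" .
    show ?thesis by (simp add: power_mult_distrib sq)
  qed
  also have "\<dots> \<le> 4 * (1/2)\<^sup>2"
    using m1 p by (intro mult_left_mono power_mono) auto
  finally have X: "b^m * (real (m + N + 1))\<^sup>2 \<le> 4 * (1/2)\<^sup>2" .
  have "4 * (1/2::real)\<^sup>2 = 1" by (simp add: power2_eq_square)
  with X have "b^m * (real (m + N + 1))\<^sup>2 \<le> 1" by simp
  then show ?thesis using N m2 by (intro exI[of _ m] exI[of _ N]) auto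
qed

lemma sum_formula:
  assumes "k \<ge> 1"
  shows "(\<Sum>t=1..T. (if k dvd t then real k else -1)) = real (k+1) * real (T div k) - real T"
proof (induction T)
  case 0 then show ?case by simp
next
  case (Suc T)
  show ?case
  proof (cases "k dvd Suc T")
    case True
    then have "Suc T div k = Suc (T div k)" by (simp add: div_Suc dvd_eq_mod_eq_0)
    then show ?thesis using Suc True by (simp add: algebra_simps)
  next
    case False
    then have "Suc T div k = T div k" by (simp add: div_Suc dvd_eq_mod_eq_0)
    then show ?thesis using Suc False by (simp add: algebra_simps)
  qed
qed

lemma div_lower:
  assumes "k \<ge> 1"
  shows "real T / real k - 1 \<le> real (T div k)"
proof -
  have "T = T div k * k + T mod k" by simp
  moreover have "T mod k < k" using assms by simp
  ultimately have "T \<le> T div k * k + k" by linarith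
  then have "real T \<le> real (T div k * k + k)" by (simp only: of_nat_le_iff)
  then have "real T \<le> real (T div k) * real k + real k" by simp
  then show ?thesis using assms by (simp add: field_simps)
qed

theorem theorem1:
  fixes \<beta>2 :: real
  assumes "0 \<le> \<beta>2" and "\<beta>2 < 1"
  shows "\<exists>(F :: real set) (f :: nat \<Rightarrow> real \<Rightarrow> real) (x1 :: real) (G :: real).
           compact F \<and> convex F \<and> F \<noteq> {} \<and> x1 \<in> F \<and>
           (\<forall>t\<ge>1. convex_on F (f t) \<and> (\<forall>x\<in>F. f t differentiable (at x)) \<and>
                    (\<forall>x\<in>F. \<bar>deriv (f t) x\<bar> \<le> G)) \<and>
           (\<forall>\<alpha>>0. \<not> ((\<lambda>T. regret F f (adam_x F f x1 \<alpha> 0 \<beta>2) T / real T) \<longlonglongrightarrow> 0))"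
proof -
  note b = assms
  obtain m N where m: "m \<ge> 1" and N: "real N \<ge> 2 / sqrt (1 - \<beta>2)"
    and bm0: "\<beta>2^m * (real (m + N + 1))\<^sup>2 \<le> 1"
    using params_exist[OF b] by blast
  define k where "k = m + N + 1"
  have k1: "k \<ge> 1" unfolding k_def by simp
  have bm: "\<beta>2^m * (real k)\<^sup>2 \<le> 1" using bm0 unfolding k_def by simp
  have kpos: "real k > 0" using k1 by simp
  define F where "F = {0..1::real}"
  define f where "f = (\<lambda>t (x::real). cc k t * x)"
  have df: "deriv (f t) x = cc k t" for t x
    unfolding f_def by (rule DERIV_imp_deriv) (auto intro!: derivative_eq_intros)
  have fapp: "f t y = cc k t * y" for t y by (simp add: f_def)
  have ccb: "\<bar>cc k t\<bar> \<le> real k" for t using k1 by (simp add: cc_def)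
  have part1: "compact F \<and> convex F \<and> F \<noteq> {} \<and> (1::real) \<in> F"
    unfolding F_def by auto
  have part2: "convex_on F (f t) \<and> (\<forall>x\<in>F. f t differentiable (at x)) \<and>
                    (\<forall>x\<in>F. \<bar>deriv (f t) x\<bar> \<le> real k)" for t
  proof (intro conjI ballI)
    show "convex_on F (f t)" unfolding f_def convex_on_def F_def by (auto simp: algebra_simps)
    show "f t differentiable (at x)" for x unfolding f_def by (auto intro!: derivative_intros)
    show "\<bar>deriv (f t) x\<bar> \<le> real k" for x using ccb by (simp add: df)
  qed
  have part3: "\<not> ((\<lambda>T. regret F f (adam_x F f 1 \<alpha> 0 \<beta>2) T / real T) \<longlonglongrightarrow> 0)"
    if a: "\<alpha> > 0" for \<alpha>
  proof
    assume L: "(\<lambda>T. regret F f (adam_x F f 1 \<alpha> 0 \<beta>2) T / real T) \<longlonglongrightarrow> 0"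
    have xeq: "adam_x F f 1 \<alpha> 0 \<beta>2 t = XX \<alpha> \<beta>2 k (t - 1)" for t
      unfolding F_def f_def by (rule adam_x_eq[OF b k1])
    have lowb: "real T / real k - real k - 1 \<le> regret F f (adam_x F f 1 \<alpha> 0 \<beta>2) T" for T
    proof -
      have S: "(\<Sum>t=1..T. (if k dvd t then real k else -1)) \<le> (\<Sum>t=1..T. f t (adam_x F f 1 \<alpha> 0 \<beta>2 t))"
      proof (rule sum_mono)
        fix t assume t: "t \<in> {1..T}"
        show "(if k dvd t then real k else -1) \<le> f t (adam_x F f 1 \<alpha> 0 \<beta>2 t)"
        proof (cases "k dvd t")
          case True
          then obtain q where q: "t = q * k" by (metis dvdE mult.commute)
          have "q \<ge> 1" using q t by (cases q) auto
          then have "XX \<alpha> \<beta>2 k (q * k - 1) = 1"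
            by (rule XX_periodic[OF a b m k_def bm N])
          then show ?thesis using True q by (simp add: fapp xeq cc_def)
        next
          case False
          then show ?thesis using XX_range(2)[of \<alpha> \<beta>2 k "t - 1"] by (simp add: fapp xeq cc_def)
        qed
      qed
      have bdd: "bdd_below ((\<lambda>y. \<Sum>t=1..T. f t y) ` F)"
      proof (rule bdd_belowI2)
        fix y assume y: "y \<in> F"
        show "- (\<Sum>t=1..T. \<bar>cc k t\<bar>) \<le> (\<Sum>t=1..T. f t y)"
          unfolding sum_negf[symmetric]
        proof (rule sum_mono)
          fix t
          have "\<bar>cc k t * y\<bar> \<le> \<bar>cc k t\<bar>" using y unfolding F_def
            by (auto simp: abs_mult intro: mult_left_le)
          then show "- \<bar>cc k t\<bar> \<le> f t y" unfolding f_def by linarith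
        qed
      qed
      have "(INF y\<in>F. \<Sum>t=1..T. f t y) \<le> (\<Sum>t=1..T. f t 0)"
        by (rule cINF_lower[OF bdd]) (simp add: F_def)
      then have I: "(INF y\<in>F. \<Sum>t=1..T. f t y) \<le> 0" by (simp add: f_def)
      have "real T / real k - real k - 1 \<le> real (k+1) * real (T div k) - real T"
      proof -
        have "real (k+1) * (real T / real k - 1) \<le> real (k+1) * real (T div k)"
          using div_lower[OF k1, of T] by (intro mult_left_mono) auto
        moreover have "real (k+1) * (real T / real k - 1) = real T + real T / real k - real k - 1"
          using kpos by (simp add: field_simps)
        ultimately show ?thesis by linarith
      qed
      then show ?thesis using S I sum_formula[OF k1, of T] unfolding regret_def by linarith
    qed
    have ev: "eventually (\<lambda>T. 1 / real k - (real k + 1) / real T \<le> regret F f (adam_x F f 1 \<alpha> 0 \<beta>2) T / real T) sequentially"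
      using eventually_ge_at_top[of "1::nat"]
    proof eventually_elim
      case (elim T)
      then have Tp: "real T > 0" by simp
      have "(real T / real k - real k - 1) / real T \<le> regret F f (adam_x F f 1 \<alpha> 0 \<beta>2) T / real T"
        using lowb[of T] Tp by (intro divide_right_mono) auto
      moreover have "(real T / real k - real k - 1) / real T = 1 / real k - (real k + 1) / real T"
        using Tp kpos by (simp add: field_simps)
      ultimately show ?case by simp
    qed
    have lim: "(\<lambda>T. 1 / real k - (real k + 1) / real T) \<longlonglongrightarrow> 1 / real k - 0"
      by (intro tendsto_diff tendsto_const lim_const_over_n)
    have "1 / real k - 0 \<le> 0"
      by (rule tendsto_le[OF trivial_limit_sequentially L lim ev])
    then show False using kpos by simp
  qed
  show ?thesis
    using part1 part2 part3 by blast
qed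

end
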